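(* Let $R$ be a commutative ring and $n\ge3$. Let $v,w_1,w_2\in R^n$ with $q(v,w_1)=q(v,w_2)=1$. Then $(v,w_1)$ and $(v,w_2)$ lie in the same $EO_{2n}(R)$-orbit and in the same $\operatorname{Epin}_{2n}(R)$-orbit of $H(R^n)$.
   Context: $H(R^n)=R^n\oplus(R^n)^*$ (elements written as pairs $(v,w)$ of row vectors) with quadratic form $q(v,w)=v\cdot w^{\intercal}$ and standard basis $e_1,\dots,e_n,f_1,\dots,f_n$. Let $\partial=(1\ n+1)\cdots(n\ 2n)$ and $E^o_{ij}(\lambda)=I_{2n}+\lambda(e_{ij}-e_{\partial(j)\partial(i)})$ for $1\le i\ne j\le 2n$, $\lambda\in R$; $EO_{2n}(R)$ is the group they generate, acting on $H(R^n)$ via matrices in the ordered basis $(e_1,\dots,e_n,f_1,\dots,f_n)$ (the group is closed under transposition, so row/column conventions give the same orbits). $\mathrm{Cl}=\mathrm{Cl}_0\oplus\mathrm{Cl}_1$ is the Clifford algebra of $(H(R^n),q)$, $x\mapsto x^*$ its canonical involution (identity on $H(R^n)$). $\operatorname{Spin}_{2n}(R)=\{x\in\mathrm{Cl}_0: xx^*=1,\ xH(R^n)x^{-1}=H(R^n)\}$, acting on $H(R^n)$ by $\pi(g)(u)=gug^{-1}$, and $\operatorname{Epin}_{2n}(R)=\pi^{-1}(EO_{2n}(R))$. *)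

theory Defs
  imports Main
begin

text \<open>The hyperbolic space H(R^n) = R^n + (R^n)^*
is represented by coordinate functions u :: nat => R, where u 0..u (n-1) are the coordinates
w.r.t. e_1..e_n and u n..u (2n-1) those w.r.t. f_1..f_n (other coordinates are ignored).\<close>

definition hv :: "nat \<Rightarrow> (nat \<Rightarrow> 'a::comm_ring_1) \<Rightarrow> (nat \<Rightarrow> 'a) \<Rightarrow> (nat \<Rightarrow> 'a)" where
  "hv n v w = (\<lambda>i. if i < n then v i else if i < 2*n then w (i - n) else 0)"

definition qf :: "nat \<Rightarrow> (nat \<Rightarrow> 'a::comm_ring_1) \<Rightarrow> (nat \<Rightarrow> 'a) \<Rightarrow> 'a" where
  "qf n v w = (\<Sum>i<n. v i * w i)"

definition qH :: "nat \<Rightarrow> (nat \<Rightarrow> 'a::comm_ring_1) \<Rightarrow> 'a" where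
  "qH n u = (\<Sum>i<n. u i * u (n + i))"

text \<open>Matrices: nat => nat => R, indices 0..2n-1 (basis e_1..e_n,f_1..f_n).\<close>

definition dperm :: "nat \<Rightarrow> nat \<Rightarrow> nat" where
  "dperm n i = (if i < n then i + n else i - n)"

definition idm :: "nat \<Rightarrow> nat \<Rightarrow> 'a::comm_ring_1" where
  "idm i j = (if i = j then 1 else 0)"

definition Eo :: "nat \<Rightarrow> nat \<Rightarrow> nat \<Rightarrow> 'a::comm_ring_1 \<Rightarrow> nat \<Rightarrow> nat \<Rightarrow> 'a" where
  "Eo n i j l = (\<lambda>a b. idm a b
      + l * ((if a = i \<and> b = j then 1 else 0) - (if a = dperm n j \<and> b = dperm n i then 1 else 0)))"

definition mmul :: "nat \<Rightarrow> (nat \<Rightarrow> nat \<Rightarrow> 'a::comm_ring_1) \<Rightarrow> (nat \<Rightarrow> nat \<Rightarrow> 'a) \<Rightarrow> nat \<Rightarrow> nat \<Rightarrow> 'a" where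
  "mmul n A B = (\<lambda>a b. \<Sum>k<2*n. A a k * B k b)"

definition mv :: "nat \<Rightarrow> (nat \<Rightarrow> nat \<Rightarrow> 'a::comm_ring_1) \<Rightarrow> (nat \<Rightarrow> 'a) \<Rightarrow> nat \<Rightarrow> 'a" where
  "mv n A u = (\<lambda>a. \<Sum>k<2*n. A a k * u k)"

text \<open>EO_{2n}(R): generated by the E^o_ij(l). Since E^o_ij(l)^{-1} = E^o_ij(-l), the
submonoid generated by them is already the subgroup generated by them.\<close>
inductive_set EO :: "nat \<Rightarrow> (nat \<Rightarrow> nat \<Rightarrow> 'a::comm_ring_1) set" for n where
  EO_id: "idm \<in> EO n"
| EO_step: "M \<in> EO n \<Longrightarrow> i < 2*n \<Longrightarrow> j < 2*n \<Longrightarrow> i \<noteq> j \<Longrightarrow> mmul n M (Eo n i j l) \<in> EO n"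

text \<open>Free (tensor) algebra on generators 0..2n-1: functions from words to R with finite support.
The Clifford algebra is its quotient by the two-sided ideal generated by u*u - q(u), u in H(R^n);
we work with representatives and the congruence cl_eq.\<close>

definition fa_mul :: "(nat list \<Rightarrow> 'a::comm_ring_1) \<Rightarrow> (nat list \<Rightarrow> 'a) \<Rightarrow> nat list \<Rightarrow> 'a" where
  "fa_mul x y = (\<lambda>w. \<Sum>k\<le>length w. x (take k w) * y (drop k w))"

definition fa_one :: "nat list \<Rightarrow> 'a::comm_ring_1" where
  "fa_one = (\<lambda>w. if w = [] then 1 else 0)"

definition fa_A :: "nat \<Rightarrow> (nat list \<Rightarrow> 'a::comm_ring_1) set" where
  "fa_A n = {x. finite {w. x w \<noteq> 0} \<and> (\<forall>w. x w \<noteq> 0 \<longrightarrow> set w \<subseteq> {..<2*n})}"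

definition vec :: "nat \<Rightarrow> (nat \<Rightarrow> 'a::comm_ring_1) \<Rightarrow> nat list \<Rightarrow> 'a" where
  "vec n u = (\<lambda>w. case w of [i] \<Rightarrow> (if i < 2*n then u i else 0) | _ \<Rightarrow> 0)"

inductive_set cl_ideal :: "nat \<Rightarrow> (nat list \<Rightarrow> 'a::comm_ring_1) set" for n where
  cl_gen: "(\<lambda>w. fa_mul (vec n u) (vec n u) w - qH n u * fa_one w) \<in> cl_ideal n"
| cl_zero: "(\<lambda>w. 0) \<in> cl_ideal n"
| cl_add: "a \<in> cl_ideal n \<Longrightarrow> b \<in> cl_ideal n \<Longrightarrow> (\<lambda>w. a w + b w) \<in> cl_ideal n"
| cl_mul: "a \<in> cl_ideal n \<Longrightarrow> x \<in> fa_A n \<Longrightarrow> y \<in> fa_A n \<Longrightarrow> fa_mul (fa_mul x a) y \<in> cl_ideal n"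

definition cl_eq :: "nat \<Rightarrow> (nat list \<Rightarrow> 'a::comm_ring_1) \<Rightarrow> (nat list \<Rightarrow> 'a) \<Rightarrow> bool" where
  "cl_eq n x y \<longleftrightarrow> (\<lambda>w. x w - y w) \<in> cl_ideal n"

text \<open>Canonical involution: the anti-automorphism that is the identity on H(R^n) (word reversal).\<close>
definition cstar :: "(nat list \<Rightarrow> 'a::comm_ring_1) \<Rightarrow> nat list \<Rightarrow> 'a" where
  "cstar x = (\<lambda>w. x (rev w))"

definition is_even :: "(nat list \<Rightarrow> 'a::comm_ring_1) \<Rightarrow> bool" where
  "is_even x \<longleftrightarrow> (\<forall>w. odd (length w) \<longrightarrow> x w = 0)"

text \<open>Spin_{2n}(R), via representatives in Cl_0 (even elements of the free algebra).
x x^* = 1 makes x^* the inverse of x (we also record x^* x = 1, which is automatic since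
Cl is a finitely generated free R-module), so x H x^{-1} = H reads x H x^* = H.\<close>
definition Spin :: "nat \<Rightarrow> (nat list \<Rightarrow> 'a::comm_ring_1) set" where
  "Spin n = {g \<in> fa_A n. is_even g
     \<and> cl_eq n (fa_mul g (cstar g)) fa_one \<and> cl_eq n (fa_mul (cstar g) g) fa_one
     \<and> (\<forall>u. \<exists>u'. cl_eq n (fa_mul (fa_mul g (vec n u)) (cstar g)) (vec n u'))
     \<and> (\<forall>u'. \<exists>u. cl_eq n (fa_mul (fa_mul g (vec n u)) (cstar g)) (vec n u'))}"

text \<open>Epin_{2n}(R) = pi^{-1}(EO_{2n}(R)), pi(g)(u) = g u g^{-1}.\<close>
definition Epin :: "nat \<Rightarrow> (nat list \<Rightarrow> 'a::comm_ring_1) set" where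
  "Epin n = {g \<in> Spin n. \<exists>M \<in> EO n.
     \<forall>u. cl_eq n (fa_mul (fa_mul g (vec n u)) (cstar g)) (vec n (mv n M u))}"

end

theory Submission
  imports Defs
begin


lemma fa_mul_assoc: "fa_mul (fa_mul x y) z = fa_mul x (fa_mul y z)"
proof
  fix w :: "nat list"
  define N where "N = length w"
  define g where "g = (\<lambda>l m. x (take l w) * y (take m (drop l w)) * z (drop (l+m) w))"
  have "fa_mul (fa_mul x y) z w = (\<Sum>k\<le>N. \<Sum>l\<le>k. g l (k - l))"
    unfolding fa_mul_def N_def[symmetric]
    apply (rule sum.cong, simp)
    apply (simp add: sum_distrib_right N_def g_def min_def)
    apply (intro impI sum.cong refl)
    apply (simp add: drop_take)
    done
  also have "\<dots> = (\<Sum>(l,m)\<in>{(i,j). i+j \<le> N}. g l m)"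
    by (rule sum.triangle_reindex_eq[symmetric])
  also have "{(i,j). i+j \<le> N} = Sigma {..N} (\<lambda>i. {..N-i})" by auto
  also have "(\<Sum>(l,m)\<in>Sigma {..N} (\<lambda>i. {..N-i}). g l m) = (\<Sum>l\<le>N. \<Sum>m\<le>N-l. g l m)"
    by (rule sum.Sigma[symmetric]) auto
  also have "\<dots> = fa_mul x (fa_mul y z) w"
    unfolding fa_mul_def N_def[symmetric]
    apply (rule sum.cong, simp)
    apply (simp add: sum_distrib_left N_def g_def mult.assoc add.commute)
    done
  finally show "fa_mul (fa_mul x y) z w = fa_mul x (fa_mul y z) w" .
qed

lemma fa_mul_distL: "fa_mul x (\<lambda>w. y w + z w) = (\<lambda>w. fa_mul x y w + fa_mul x z w)"
  by (simp add: fa_mul_def distrib_left sum.distrib)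
lemma fa_mul_distR: "fa_mul (\<lambda>w. y w + z w) x = (\<lambda>w. fa_mul y x w + fa_mul z x w)"
  by (simp add: fa_mul_def distrib_right sum.distrib)
lemma fa_mul_negL: "fa_mul (\<lambda>w. - y w) x = (\<lambda>w. - fa_mul y x w)"
  by (simp add: fa_mul_def sum_negf)
lemma fa_mul_negR: "fa_mul x (\<lambda>w. - y w) = (\<lambda>w. - fa_mul x y w)"
  by (simp add: fa_mul_def sum_negf)
lemma fa_mul_zeroL: "fa_mul (\<lambda>w. 0) x = (\<lambda>w. 0)"
  by (simp add: fa_mul_def)
lemma fa_mul_zeroR: "fa_mul x (\<lambda>w. 0) = (\<lambda>w. 0)"
  by (simp add: fa_mul_def)

lemma fa_mul_oneL: "fa_mul fa_one x = x"
proof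
  fix w :: "nat list"
  have "fa_mul fa_one x w = (\<Sum>k\<le>length w. if k = 0 then x w else 0)"
    unfolding fa_mul_def fa_one_def by (intro sum.cong refl) auto
  then show "fa_mul fa_one x w = x w" by simp
qed

lemma fa_mul_oneR: "fa_mul x fa_one = x"
proof
  fix w :: "nat list"
  have "fa_mul x fa_one w = (\<Sum>k\<le>length w. if k = length w then x w else 0)"
    unfolding fa_mul_def fa_one_def by (intro sum.cong refl) auto
  then show "fa_mul x fa_one w = x w" by simp
qed

lemma cstar_mul: "cstar (fa_mul x y) = fa_mul (cstar y) (cstar x)"
proof
  fix w :: "nat list"
  define N where "N = length w"
  have "cstar (fa_mul x y) w = (\<Sum>k\<le>N. x (take k (rev w)) * y (drop k (rev w)))"
    by (simp add: cstar_def fa_mul_def N_def)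
  also have "\<dots> = (\<Sum>k\<in>{0..N}. x (take (N + 0 - k) (rev w)) * y (drop (N + 0 - k) (rev w)))"
    by (subst sum.atLeastAtMost_rev) (simp add: atLeast0AtMost)
  also have "\<dots> = (\<Sum>k\<le>N. y (rev (take k w)) * x (rev (drop k w)))"
    by (auto simp: atLeast0AtMost take_rev drop_rev N_def mult.commute intro!: sum.cong)
  also have "\<dots> = fa_mul (cstar y) (cstar x) w"
    by (simp add: cstar_def fa_mul_def N_def)
  finally show "cstar (fa_mul x y) w = fa_mul (cstar y) (cstar x) w" .
qed

lemma fa_A_one: "fa_one \<in> fa_A n"
proof -
  have "{w. fa_one w \<noteq> (0::'a)} \<subseteq> {[]}" by (auto simp: fa_one_def)
  then show ?thesis by (auto simp: fa_A_def fa_one_def intro: finite_subset)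
qed

lemma fa_A_zero: "(\<lambda>w. 0) \<in> fa_A n"
  by (simp add: fa_A_def)

lemma fa_A_sc: "(\<lambda>w. if w = [] then c else 0) \<in> fa_A n"
proof -
  have "{w. (if w = [] then c else 0) \<noteq> 0} \<subseteq> {[]}" by auto
  then show ?thesis by (auto simp: fa_A_def intro: finite_subset)
qed

lemma fa_A_vec: "vec n u \<in> fa_A n"
proof -
  have "{w. vec n u w \<noteq> 0} \<subseteq> (\<lambda>i. [i]) ` {..<2*n}"
  proof
    fix w assume "w \<in> {w. vec n u w \<noteq> 0}"
    then show "w \<in> (\<lambda>i. [i]) ` {..<2*n}"
    proof (cases w)
      case (Cons i r)
      then show ?thesis using \<open>w \<in> _\<close> by (cases r) (auto simp: vec_def split: if_splits)
    qed (use \<open>w \<in> _\<close> in \<open>auto simp: vec_def\<close>)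
  qed
  moreover have "\<forall>w. vec n u w \<noteq> 0 \<longrightarrow> set w \<subseteq> {..<2*n}"
  proof (intro allI impI)
    fix w assume h: "vec n u w \<noteq> 0"
    show "set w \<subseteq> {..<2*n}"
    proof (cases w)
      case (Cons i r)
      then show ?thesis using h by (cases r) (auto simp: vec_def split: if_splits)
    qed (use h in \<open>auto simp: vec_def\<close>)
  qed
  ultimately show ?thesis by (auto simp: fa_A_def intro: finite_subset)
qed

lemma fa_A_add: "x \<in> fa_A n \<Longrightarrow> y \<in> fa_A n \<Longrightarrow> (\<lambda>w. x w + y w) \<in> fa_A n"
proof -
  assume a: "x \<in> fa_A n" "y \<in> fa_A n"
  have "{w. x w + y w \<noteq> 0} \<subseteq> {w. x w \<noteq> 0} \<union> {w. y w \<noteq> 0}" by auto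
  moreover have "\<forall>w. x w + y w \<noteq> 0 \<longrightarrow> set w \<subseteq> {..<2*n}"
  proof (intro allI impI)
    fix w assume "x w + y w \<noteq> 0"
    then have "x w \<noteq> 0 \<or> y w \<noteq> 0" by auto
    then show "set w \<subseteq> {..<2*n}" using a unfolding fa_A_def by blast
  qed
  ultimately show ?thesis using a by (auto simp: fa_A_def intro: finite_subset)
qed

lemma fa_A_neg: "x \<in> fa_A n \<Longrightarrow> (\<lambda>w. - x w) \<in> fa_A n"
  by (simp add: fa_A_def)

lemma fa_mul_nz:
  assumes "fa_mul x y w \<noteq> 0"
  obtains k where "x (take k w) \<noteq> 0" "y (drop k w) \<noteq> 0"
proof -
  from assms obtain k where "x (take k w) * y (drop k w) \<noteq> 0"
    unfolding fa_mul_def by (rule sum.not_neutral_contains_not_neutral)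
  then show ?thesis using that by (metis mult_zero_left mult_zero_right)
qed

lemma fa_A_mul: "x \<in> fa_A n \<Longrightarrow> y \<in> fa_A n \<Longrightarrow> fa_mul x y \<in> fa_A n"
proof -
  assume a: "x \<in> fa_A n" "y \<in> fa_A n"
  have "{w. fa_mul x y w \<noteq> 0} \<subseteq> (\<lambda>(p,q). p @ q) ` ({w. x w \<noteq> 0} \<times> {w. y w \<noteq> 0})"
  proof
    fix w assume "w \<in> {w. fa_mul x y w \<noteq> 0}"
    then obtain k where "x (take k w) \<noteq> 0" "y (drop k w) \<noteq> 0"
      by (auto elim: fa_mul_nz)
    then show "w \<in> (\<lambda>(p,q). p @ q) ` ({w. x w \<noteq> 0} \<times> {w. y w \<noteq> 0})"
      by (intro image_eqI[of _ _ "(take k w, drop k w)"]) auto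
  qed
  moreover have "\<forall>w. fa_mul x y w \<noteq> 0 \<longrightarrow> set w \<subseteq> {..<2*n}"
  proof (intro allI impI)
    fix w assume "fa_mul x y w \<noteq> 0"
    then obtain k where "x (take k w) \<noteq> 0" "y (drop k w) \<noteq> 0"
      by (auto elim: fa_mul_nz)
    then have "set (take k w) \<subseteq> {..<2*n}" "set (drop k w) \<subseteq> {..<2*n}"
      using a by (auto simp: fa_A_def)
    then show "set w \<subseteq> {..<2*n}"
      by (metis append_take_drop_id le_sup_iff set_append)
  qed
  ultimately show ?thesis using a by (auto simp: fa_A_def intro: finite_subset)
qed

lemma fa_A_cstar: "x \<in> fa_A n \<Longrightarrow> cstar x \<in> fa_A n"
proof -
  assume a: "x \<in> fa_A n"
  have "{w. cstar x w \<noteq> 0} = rev ` {w. x w \<noteq> 0}"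
  proof
    show "{w. cstar x w \<noteq> 0} \<subseteq> rev ` {w. x w \<noteq> 0}"
    proof
      fix w assume "w \<in> {w. cstar x w \<noteq> 0}"
      then show "w \<in> rev ` {w. x w \<noteq> 0}"
        by (intro image_eqI[of _ _ "rev w"]) (auto simp: cstar_def)
    qed
  qed (auto simp: cstar_def)
  moreover have "\<forall>w. cstar x w \<noteq> 0 \<longrightarrow> set w \<subseteq> {..<2*n}"
  proof (intro allI impI)
    fix w assume "cstar x w \<noteq> 0"
    then have "x (rev w) \<noteq> 0" by (simp add: cstar_def)
    then have "set (rev w) \<subseteq> {..<2*n}" using a unfolding fa_A_def by blast
    then show "set w \<subseteq> {..<2*n}" by simp
  qed
  ultimately show ?thesis using a by (auto simp: fa_A_def)
qed

section \<open>The free algebra as a ring\<close>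

typedef (overloaded) 'a fa = "UNIV :: (nat list \<Rightarrow> 'a::comm_ring_1) set"
  morphisms fr Fa by auto

setup_lifting type_definition_fa

instantiation fa :: (comm_ring_1) ring_1
begin
lift_definition zero_fa :: "'a fa" is "\<lambda>w. 0" .
lift_definition one_fa :: "'a fa" is fa_one .
lift_definition plus_fa :: "'a fa \<Rightarrow> 'a fa \<Rightarrow> 'a fa" is "\<lambda>x y w. x w + y w" .
lift_definition minus_fa :: "'a fa \<Rightarrow> 'a fa \<Rightarrow> 'a fa" is "\<lambda>x y w. x w - y w" .
lift_definition uminus_fa :: "'a fa \<Rightarrow> 'a fa" is "\<lambda>x w. - x w" .
lift_definition times_fa :: "'a fa \<Rightarrow> 'a fa \<Rightarrow> 'a fa" is fa_mul .
instance
proof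
  fix a b c :: "'a fa"
  show "a * b * c = a * (b * c)" by transfer (rule fa_mul_assoc)
  show "1 * a = a" by transfer (rule fa_mul_oneL)
  show "a * 1 = a" by transfer (rule fa_mul_oneR)
  show "(a + b) * c = a * c + b * c" by transfer (rule fa_mul_distR)
  show "a * (b + c) = a * b + a * c" by transfer (rule fa_mul_distL)
  show "a + b + c = a + (b + c)" by transfer (simp add: add.assoc)
  show "a + b = b + a" by transfer (simp add: add.commute)
  show "0 + a = a" by transfer simp
  show "- a + a = 0" by transfer simp
  show "a - b = a + - b" by transfer simp
  show "(0::'a fa) \<noteq> 1" by transfer (auto simp: fa_one_def fun_eq_iff)
qed
end

lift_definition sc :: "'a::comm_ring_1 \<Rightarrow> 'a fa" is "\<lambda>c w. if w = [] then c else 0" .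
lift_definition cs :: "'a::comm_ring_1 fa \<Rightarrow> 'a fa" is cstar .
lift_definition V :: "nat \<Rightarrow> (nat \<Rightarrow> 'a::comm_ring_1) \<Rightarrow> 'a fa" is vec .

lemma fr_mul: "fr (X * Y) = fa_mul (fr X) (fr Y)" by (rule times_fa.rep_eq)
lemma fr_sc: "fr (sc c) w = (if w = [] then c else 0)" by (simp add: sc.rep_eq)

lemma fr_sc_mul: "fr (sc c * X) w = c * fr X w"
proof -
  have "fr (sc c * X) w = (\<Sum>k\<le>length w. fr (sc c) (take k w) * fr X (drop k w))"
    unfolding fr_mul fa_mul_def ..
  also have "\<dots> = (\<Sum>k\<le>length w. if k = 0 then c * fr X w else 0)"
    by (rule sum.cong) (auto simp: fr_sc)
  finally show ?thesis by simp
qed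

lemma fr_mul_sc: "fr (X * sc c) w = c * fr X w"
proof -
  have "fr (X * sc c) w = (\<Sum>k\<le>length w. fr X (take k w) * fr (sc c) (drop k w))"
    unfolding fr_mul fa_mul_def ..
  also have "\<dots> = (\<Sum>k\<le>length w. if k = length w then c * fr X w else 0)"
    by (rule sum.cong) (auto simp: fr_sc)
  finally show ?thesis by simp
qed

lemma fa_eqI: "(\<And>w. fr X w = fr Y w) \<Longrightarrow> X = Y"
  by (metis fr_inject ext)

lemma sc_comm: "sc c * X = X * sc c"
  by (rule fa_eqI) (simp only: fr_sc_mul fr_mul_sc)

lemma sc_comm2: "X * (sc c * Y) = sc c * (X * Y)"
  by (metis mult.assoc sc_comm)

lemma sc_mult: "sc c * sc d = sc (c * d)"
  by (rule fa_eqI) (simp add: fr_sc_mul fr_sc)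

lemma sc_mult2: "sc c * (sc d * X) = sc (c * d) * X"
  by (metis mult.assoc sc_mult)

lemma sc_add: "sc (c + d) = sc c + sc d" by transfer auto
lemma sc_diff: "sc (c - d) = sc c - sc d" by transfer auto
lemma sc_neg: "sc (- c) = - sc c" by transfer auto
lemma sc_one: "sc 1 = 1" by transfer (auto simp: fa_one_def)
lemma sc_zero: "sc 0 = 0" by transfer auto

lemma cs_mult: "cs (X * Y) = cs Y * cs X" by transfer (rule cstar_mul)
lemma cs_add: "cs (X + Y) = cs X + cs Y" by transfer (simp add: cstar_def)
lemma cs_diff: "cs (X - Y) = cs X - cs Y" by transfer (simp add: cstar_def)
lemma cs_one: "cs 1 = 1" by transfer (simp add: cstar_def fa_one_def)
lemma cs_sc: "cs (sc c) = sc c" by transfer (simp add: cstar_def)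
lemma cs_V: "cs (V n u) = V n u"
  by transfer (auto simp: cstar_def vec_def fun_eq_iff split: list.splits)



lemmas fr_one = one_fa.rep_eq
lemmas fr_zero = zero_fa.rep_eq
lemmas fr_plus = plus_fa.rep_eq
lemmas fr_minus = minus_fa.rep_eq
lemmas fr_uminus = uminus_fa.rep_eq
lemmas fr_cs = cs.rep_eq
lemmas fr_V = V.rep_eq

definition AA :: "nat \<Rightarrow> 'a::comm_ring_1 fa \<Rightarrow> bool" where "AA n X \<longleftrightarrow> fr X \<in> fa_A n"
definition II :: "nat \<Rightarrow> 'a::comm_ring_1 fa \<Rightarrow> bool" where "II n X \<longleftrightarrow> fr X \<in> cl_ideal n"
definition ceq :: "nat \<Rightarrow> 'a::comm_ring_1 fa \<Rightarrow> 'a fa \<Rightarrow> bool" where "ceq n X Y \<longleftrightarrow> II n (X - Y)"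

lemma AA_one: "AA n 1" by (simp add: AA_def fr_one fa_A_one)
lemma AA_sc: "AA n (sc c)" by (simp add: AA_def sc.rep_eq fa_A_sc)
lemma AA_V: "AA n (V n u)" by (simp add: AA_def fr_V fa_A_vec)
lemma AA_add: "AA n X \<Longrightarrow> AA n Y \<Longrightarrow> AA n (X + Y)" by (simp add: AA_def fr_plus fa_A_add)
lemma AA_uminus: "AA n X \<Longrightarrow> AA n (- X)" by (simp add: AA_def fr_uminus fa_A_neg)
lemma AA_diff: "AA n X \<Longrightarrow> AA n Y \<Longrightarrow> AA n (X - Y)"
  by (metis AA_add AA_uminus diff_conv_add_uminus)
lemma AA_mult: "AA n X \<Longrightarrow> AA n Y \<Longrightarrow> AA n (X * Y)" by (simp add: AA_def fr_mul fa_A_mul)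
lemma AA_cs: "AA n X \<Longrightarrow> AA n (cs X)" by (simp add: AA_def fr_cs fa_A_cstar)
lemmas AA_intros = AA_one AA_sc AA_V AA_add AA_uminus AA_diff AA_mult AA_cs

lemma II_zero: "II n 0" by (simp add: II_def fr_zero cl_ideal.cl_zero)
lemma II_add: "II n X \<Longrightarrow> II n Y \<Longrightarrow> II n (X + Y)" by (simp add: II_def fr_plus cl_ideal.cl_add)
lemma II_multL: "II n X \<Longrightarrow> AA n C \<Longrightarrow> II n (C * X)"
proof -
  assume a: "II n X" "AA n C"
  have "fa_mul (fa_mul (fr C) (fr X)) fa_one \<in> cl_ideal n"
    using a by (intro cl_ideal.cl_mul) (auto simp: II_def AA_def fa_A_one)
  then show ?thesis by (simp add: II_def fr_mul fa_mul_oneR)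
qed
lemma II_multR: "II n X \<Longrightarrow> AA n C \<Longrightarrow> II n (X * C)"
proof -
  assume a: "II n X" "AA n C"
  have "fa_mul (fa_mul fa_one (fr X)) (fr C) \<in> cl_ideal n"
    using a by (intro cl_ideal.cl_mul) (auto simp: II_def AA_def fa_A_one)
  then show ?thesis by (simp add: II_def fr_mul fa_mul_oneL)
qed
lemma II_uminus: "II n X \<Longrightarrow> II n (- X)"
proof -
  assume "II n X"
  then have "II n (sc (-1) * X)" by (intro II_multL AA_sc)
  then show ?thesis by (simp add: sc_neg sc_one)
qed
lemma II_diff: "II n X \<Longrightarrow> II n Y \<Longrightarrow> II n (X - Y)"
  by (metis II_add II_uminus diff_conv_add_uminus)

lemma II_gen: "II n (V n u * V n u - sc (qH n u))"
proof -
  have "fr (V n u * V n u - sc (qH n u)) = (\<lambda>w. fa_mul (vec n u) (vec n u) w - qH n u * fa_one w)"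
    by (simp add: fun_eq_iff fr_minus fr_mul fr_V sc.rep_eq fa_one_def)
  then show ?thesis by (simp add: II_def cl_ideal.cl_gen)
qed

lemma ceq_refl: "ceq n X X" by (simp add: ceq_def II_zero)
lemma ceq_sym: "ceq n X Y \<Longrightarrow> ceq n Y X"
  unfolding ceq_def by (drule II_uminus) simp
lemma ceq_trans: "ceq n X Y \<Longrightarrow> ceq n Y Z \<Longrightarrow> ceq n X Z"
  unfolding ceq_def by (drule (1) II_add) simp
lemma ceq_add: "ceq n X Y \<Longrightarrow> ceq n X' Y' \<Longrightarrow> ceq n (X + X') (Y + Y')"
  unfolding ceq_def by (drule (1) II_add) (simp add: algebra_simps)
lemma ceq_multL: "ceq n X Y \<Longrightarrow> AA n C \<Longrightarrow> ceq n (C * X) (C * Y)"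
  unfolding ceq_def by (drule (1) II_multL) (simp add: algebra_simps)
lemma ceq_multR: "ceq n X Y \<Longrightarrow> AA n C \<Longrightarrow> ceq n (X * C) (Y * C)"
  unfolding ceq_def by (drule (1) II_multR) (simp add: algebra_simps)
lemma ceq_eq_trans [trans]: "X = Y \<Longrightarrow> ceq n Y Z \<Longrightarrow> ceq n X Z" by simp
lemma ceq_trans_eq [trans]: "ceq n X Y \<Longrightarrow> Y = Z \<Longrightarrow> ceq n X Z" by simp
declare ceq_trans [trans]

lemma ceq_cl_eq: "ceq n X Y \<longleftrightarrow> cl_eq n (fr X) (fr Y)"
  by (simp add: ceq_def II_def cl_eq_def fr_minus)

lemma id1:
  fixes x u z :: "'a::comm_ring_1 fa"
  shows "(1 + x*u) * z * (1 + u*x) - (z + (sc buz * x - sc bxz * u))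
   = (x*(u*z + z*u - sc buz) - (x*z + z*x - sc bxz)*u) + z*(x*u+u*x)
     + (x*(u*z + z*u - sc buz)*u*x + sc buz * (x*(x*u+u*x)) - sc buz*((x*x)*u) - x*z*(u*u)*x)"
proof -
  have e: "x * sc b = sc b * x" "u * sc b = sc b * u" for b by (simp_all add: sc_comm)
  show ?thesis by (simp add: algebra_simps e)
qed

lemma id2:
  fixes x u :: "'a::comm_ring_1 fa"
  shows "(1 + x*u) * (1 + u*x) - 1 = (x*u + u*x) + x*(u*u)*x"
  by (simp add: algebra_simps)

lemma key1:
  assumes ax: "AA n x" and au: "AA n u" and az: "AA n z"
    and r1: "II n (x*x)" and r2: "II n (u*u)" and r3: "II n (x*u+u*x)"
    and r4: "II n (x*z+z*x - sc bxz)" and r5: "II n (u*z+z*u - sc buz)"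
  shows "ceq n ((1 + x*u) * z * (1 + u*x)) (z + (sc buz * x - sc bxz * u))"
  unfolding ceq_def id1
  by (intro II_add II_diff II_multL II_multR r1 r2 r3 r4 r5 ax au az AA_intros)

lemma key2:
  assumes ax: "AA n x" and au: "AA n u"
    and r2: "II n (u*u)" and r3: "II n (x*u+u*x)"
  shows "ceq n ((1 + x*u) * (1 + u*x)) 1"
  unfolding ceq_def id2
  by (intro II_add II_diff II_multL II_multR r2 r3 ax au AA_intros)



lemma V_cong: "(\<And>k. k < 2*n \<Longrightarrow> f k = f' k) \<Longrightarrow> V n f = V n f'"
  by (rule fa_eqI) (auto simp: fr_V vec_def split: list.splits)

lemma V_add: "V n a + V n b = V n (\<lambda>k. a k + b k)"
  by (rule fa_eqI) (auto simp: fr_V fr_plus vec_def split: list.splits)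

lemma V_diff: "V n a - V n b = V n (\<lambda>k. a k - b k)"
  by (rule fa_eqI) (auto simp: fr_V fr_minus vec_def split: list.splits)

lemma sc_V: "sc c * V n a = V n (\<lambda>k. c * a k)"
  by (rule fa_eqI) (auto simp: fr_V fr_sc_mul vec_def split: list.splits)

definition bl :: "nat \<Rightarrow> (nat \<Rightarrow> 'a::comm_ring_1) \<Rightarrow> (nat \<Rightarrow> 'a) \<Rightarrow> 'a" where
  "bl n a b = qH n (\<lambda>k. a k + b k) - qH n a - qH n b"

lemma bl_formula: "bl n a b = (\<Sum>k<n. a k * b (n+k) + b k * a (n+k))"
  by (simp add: bl_def qH_def algebra_simps sum.distrib sum_subtractf)

lemma polar: "II n (V n a * V n b + V n b * V n a - sc (bl n a b))"
proof -
  have "V n a * V n b + V n b * V n a - sc (bl n a b) =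
     (V n (\<lambda>k. a k + b k) * V n (\<lambda>k. a k + b k) - sc (qH n (\<lambda>k. a k + b k)))
     - (V n a * V n a - sc (qH n a)) - (V n b * V n b - sc (qH n b))"
    by (simp add: V_add[symmetric] bl_def sc_diff sc_add algebra_simps)
  then show ?thesis by (simp add: II_diff II_gen)
qed

lemma II_sq: "qH n a = 0 \<Longrightarrow> II n (V n a * V n a)"
  using II_gen[of n a] by (simp add: sc_zero)

definition dl :: "nat \<Rightarrow> nat \<Rightarrow> 'a::comm_ring_1" where "dl a = (\<lambda>k. if k = a then 1 else 0)"

lemma dperm_lt: "i < 2*n \<Longrightarrow> dperm n i < 2*n" unfolding dperm_def by arith
lemma dperm_dperm: "i < 2*n \<Longrightarrow> dperm n (dperm n i) = i" unfolding dperm_def by arith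
lemma dperm_neq: "i < 2*n \<Longrightarrow> dperm n i \<noteq> i" by (auto simp: dperm_def)
lemma dperm_inj: "i < 2*n \<Longrightarrow> j < 2*n \<Longrightarrow> dperm n i = dperm n j \<longleftrightarrow> i = j"
  by (auto simp: dperm_def split: if_splits)

lemma qH_dl: "qH n (\<lambda>k. c * dl a k) = 0"
  by (auto simp: qH_def dl_def intro!: sum.neutral)

lemma bl_dl:
  assumes "a < 2*n"
  shows "bl n (\<lambda>k. c * dl a k) z = c * z (dperm n a)"
proof (cases "a < n")
  case True
  have "bl n (\<lambda>k. c * dl a k) z = (\<Sum>k<n. if k = a then c * z (n + a) else 0)"
    unfolding bl_formula using True by (intro sum.cong) (auto simp: dl_def)
  then show ?thesis using True by (simp add: dperm_def add.commute)
next
  case False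
  have "bl n (\<lambda>k. c * dl a k) z = (\<Sum>k<n. if k = a - n then c * z (a - n) else 0)"
    unfolding bl_formula using False assms by (intro sum.cong) (auto simp: dl_def mult.commute)
  moreover have "a - n < n" using False assms by arith
  ultimately show ?thesis using False by (simp add: dperm_def)
qed

lemma mv_mmul: "mv n (mmul n A B) z = mv n A (mv n B z)"
proof
  fix a
  show "mv n (mmul n A B) z a = mv n A (mv n B z) a"
    unfolding mv_def mmul_def sum_distrib_right sum_distrib_left mult.assoc
    by (rule sum.swap)
qed

lemma mv_cong: "(\<And>k. k < 2*n \<Longrightarrow> z k = z' k) \<Longrightarrow> mv n M z = mv n M z'"
  unfolding mv_def by (intro ext sum.cong) auto

lemma mv_idm: "a < 2*n \<Longrightarrow> mv n idm z a = z a"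
proof -
  assume a: "a < 2*n"
  have "mv n idm z a = (\<Sum>k<2*n. if a = k then z k else 0)"
    unfolding mv_def idm_def by (intro sum.cong) auto
  then show ?thesis using a by simp
qed

lemma mv_Eo:
  assumes "i < 2*n" "j < 2*n" "a < 2*n"
  shows "mv n (Eo n i j l) z a = z a + l * ((if a = i then z j else 0) - (if a = dperm n j then z (dperm n i) else 0))"
proof -
  have "mv n (Eo n i j l) z a = (\<Sum>b<2*n. (if a = b then z b else 0)
      + l * ((if a = i then (if b = j then z b else 0) else 0) - (if a = dperm n j then (if b = dperm n i then z b else 0) else 0)))"
    unfolding mv_def Eo_def idm_def by (intro sum.cong) (auto simp: algebra_simps)
  also have "\<dots> = z a + l * ((if a = i then z j else 0) - (if a = dperm n j then z (dperm n i) else 0))"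
    using assms dperm_lt[of i n] by (simp add: sum.distrib sum_subtractf sum_distrib_left[symmetric])
  finally show ?thesis .
qed



definition is_odd :: "(nat list \<Rightarrow> 'a::comm_ring_1) \<Rightarrow> bool" where
  "is_odd x \<longleftrightarrow> (\<forall>w. even (length w) \<longrightarrow> x w = 0)"

lemma even_one: "is_even fa_one"
  by (auto simp: is_even_def fa_one_def)

lemma odd_vec: "is_odd (vec n u)"
  unfolding is_odd_def
proof (intro allI impI)
  fix w :: "nat list" assume "even (length w)"
  then show "vec n u w = 0"
    by (cases w; cases "tl w") (auto simp: vec_def)
qed

lemma even_add: "is_even x \<Longrightarrow> is_even y \<Longrightarrow> is_even (\<lambda>w. x w + y w)"
  by (simp add: is_even_def)

lemma even_mul_oo: "is_odd x \<Longrightarrow> is_odd y \<Longrightarrow> is_even (fa_mul x y)"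
  unfolding is_even_def
proof (intro allI impI)
  fix w :: "nat list" assume ox: "is_odd x" and oy: "is_odd y" and w: "odd (length w)"
  show "fa_mul x y w = 0" unfolding fa_mul_def
  proof (rule sum.neutral, intro ballI)
    fix k assume "k \<in> {..length w}"
    then have k: "k \<le> length w" by simp
    show "x (take k w) * y (drop k w) = 0"
    proof (cases "even k")
      case True then show ?thesis using ox k by (simp add: is_odd_def min_def)
    next
      case False
      then have "even (length w - k)" using w k by simp
      then show ?thesis using oy by (simp add: is_odd_def)
    qed
  qed
qed

lemma even_mul_ee: "is_even x \<Longrightarrow> is_even y \<Longrightarrow> is_even (fa_mul x y)"
  unfolding is_even_def
proof (intro allI impI)
  fix w :: "nat list" assume ox: "\<forall>w. odd (length w) \<longrightarrow> x w = 0"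
    and oy: "\<forall>w. odd (length w) \<longrightarrow> y w = 0" and w: "odd (length w)"
  show "fa_mul x y w = 0" unfolding fa_mul_def
  proof (rule sum.neutral, intro ballI)
    fix k assume "k \<in> {..length w}"
    then have k: "k \<le> length w" by simp
    show "x (take k w) * y (drop k w) = 0"
    proof (cases "odd k")
      case True then show ?thesis using ox k by (simp add: min_def)
    next
      case False
      then have "odd (length w - k)" using w k by simp
      then show ?thesis using oy by simp
    qed
  qed
qed

section \<open>Spin and Epin in terms of the ring\<close>

lemma Spin_iff: "fr G \<in> Spin n \<longleftrightarrow> AA n G \<and> is_even (fr G) \<and> ceq n (G * cs G) 1 \<and> ceq n (cs G * G) 1
   \<and> (\<forall>u. \<exists>u'. ceq n (G * V n u * cs G) (V n u')) \<and> (\<forall>u'. \<exists>u. ceq n (G * V n u * cs G) (V n u'))"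
  by (simp add: Spin_def AA_def ceq_cl_eq fr_mul fr_cs fr_V fr_one)

lemma Epin_I: "fr G \<in> Spin n \<Longrightarrow> M \<in> EO n \<Longrightarrow> (\<forall>u. ceq n (G * V n u * cs G) (V n (mv n M u))) \<Longrightarrow> fr G \<in> Epin n"
  by (auto simp: Epin_def ceq_cl_eq fr_mul fr_cs fr_V)

lemma Spin_mult:
  assumes G: "fr G \<in> Spin n" and H: "fr H \<in> Spin n"
  shows "fr (G * H) \<in> Spin n"
proof -
  from G have aG: "AA n G" and eG: "is_even (fr G)" and gG: "ceq n (G * cs G) 1" and gG': "ceq n (cs G * G) 1"
    and sG: "\<forall>u. \<exists>u'. ceq n (G * V n u * cs G) (V n u')" and tG: "\<forall>u'. \<exists>u. ceq n (G * V n u * cs G) (V n u')"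
    by (simp_all add: Spin_iff)
  from H have aH: "AA n H" and eH: "is_even (fr H)" and gH: "ceq n (H * cs H) 1" and gH': "ceq n (cs H * H) 1"
    and sH: "\<forall>u. \<exists>u'. ceq n (H * V n u * cs H) (V n u')" and tH: "\<forall>u'. \<exists>u. ceq n (H * V n u * cs H) (V n u')"
    by (simp_all add: Spin_iff)
  have csGH: "cs (G * H) = cs H * cs G" by (rule cs_mult)
  have c1: "ceq n (G * H * cs (G * H)) 1"
  proof -
    have "G * H * cs (G * H) = G * (H * cs H) * cs G" by (simp add: csGH mult.assoc)
    also have "ceq n \<dots> (G * 1 * cs G)"
      by (intro ceq_multL ceq_multR gH aG AA_cs)
    also have "G * 1 * cs G = G * cs G" by simp
    also have "ceq n \<dots> 1" by (rule gG)
    finally show ?thesis .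
  qed
  have c2: "ceq n (cs (G * H) * (G * H)) 1"
  proof -
    have "cs (G * H) * (G * H) = cs H * (cs G * G) * H" by (simp add: csGH mult.assoc)
    also have "ceq n \<dots> (cs H * 1 * H)"
      by (intro ceq_multL ceq_multR gG' aH AA_cs)
    also have "cs H * 1 * H = cs H * H" by simp
    also have "ceq n \<dots> 1" by (rule gH')
    finally show ?thesis .
  qed
  have conj: "G * H * V n u * cs (G * H) = G * (H * V n u * cs H) * cs G" for u
    by (simp add: csGH mult.assoc)
  have s: "\<exists>u'. ceq n (G * H * V n u * cs (G * H)) (V n u')" for u
  proof -
    obtain u1 where u1: "ceq n (H * V n u * cs H) (V n u1)" using sH by blast
    obtain u2 where u2: "ceq n (G * V n u1 * cs G) (V n u2)" using sG by blast
    have "ceq n (G * H * V n u * cs (G * H)) (G * V n u1 * cs G)"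
      unfolding conj by (intro ceq_multL ceq_multR u1 aG AA_cs)
    then show ?thesis using u2 by (blast intro: ceq_trans)
  qed
  have t: "\<exists>u. ceq n (G * H * V n u * cs (G * H)) (V n u')" for u'
  proof -
    obtain u1 where u1: "ceq n (G * V n u1 * cs G) (V n u')" using tG by blast
    obtain u where u: "ceq n (H * V n u * cs H) (V n u1)" using tH by blast
    have "ceq n (G * H * V n u * cs (G * H)) (G * V n u1 * cs G)"
      unfolding conj by (intro ceq_multL ceq_multR u aG AA_cs)
    then show ?thesis using u1 by (blast intro: ceq_trans)
  qed
  have "AA n (G * H)" using aG aH by (rule AA_mult)
  moreover have "is_even (fr (G * H))" using eG eH by (simp add: fr_mul even_mul_ee)
  ultimately show ?thesis using c1 c2 s t by (simp add: Spin_iff)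
qed

section \<open>Lifting generators\<close>

lemma gen:
  assumes ij: "i < 2*n" "j < 2*n" "i \<noteq> j"
  shows "\<exists>g. fr g \<in> Spin n \<and> (\<forall>z. ceq n (g * V n z * cs g) (V n (mv n (Eo n i j l) z)))"
proof -
  define a where "a = (\<lambda>k. l * dl i k)"
  define b where "b = (\<lambda>k. (1::'a) * dl (dperm n j) k)"
  define x where "x = V n a"
  define u where "u = V n b"
  define g where "g = 1 + x * u"
  have dj: "dperm n j < 2*n" "dperm n i < 2*n" using ij by (simp_all add: dperm_lt)
  have nd: "dperm n i \<noteq> dperm n j" "dperm n i \<noteq> i" "dperm n j \<noteq> j"
    using ij by (simp_all add: dperm_inj dperm_neq)
  have ddj: "dperm n (dperm n j) = j" using ij by (simp add: dperm_dperm)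
  have csg: "cs g = 1 + u * x" by (simp add: g_def cs_add cs_one cs_mult x_def u_def cs_V)
  have ax: "AA n x" and au: "AA n u" by (simp_all add: x_def u_def AA_V)
  have ag: "AA n g" unfolding g_def by (intro AA_intros ax au)
  have r1: "II n (x * x)" unfolding x_def a_def by (rule II_sq) (rule qH_dl)
  have r2: "II n (u * u)" unfolding u_def b_def by (rule II_sq) (rule qH_dl)
  have blab: "bl n a b = 0"
    unfolding a_def bl_dl[OF ij(1)] using nd by (simp add: b_def dl_def)
  have r3: "II n (x * u + u * x)" using polar[of n a b] blab by (simp add: x_def u_def sc_zero)
  have r3': "II n (u * x + x * u)" using r3 by (simp add: add.commute)
  have conj: "ceq n (g * V n z * cs g) (V n (mv n (Eo n i j l) z))" for z
  proof -
    have r4: "II n (x * V n z + V n z * x - sc (bl n a z))" unfolding x_def by (rule polar)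
    have r5: "II n (u * V n z + V n z * u - sc (bl n b z))" unfolding u_def by (rule polar)
    have blb: "bl n b z = z j" unfolding b_def bl_dl[OF dj(1)] using ddj by simp
    have bla: "bl n a z = l * z (dperm n i)" unfolding a_def using ij by (simp add: bl_dl)
    have "ceq n (g * V n z * cs g) (V n z + (sc (bl n b z) * x - sc (bl n a z) * u))"
      unfolding csg unfolding g_def by (rule key1[OF ax au AA_V r1 r2 r3 r4 r5])
    also have "V n z + (sc (bl n b z) * x - sc (bl n a z) * u) = V n (mv n (Eo n i j l) z)"
      unfolding x_def u_def sc_V V_diff V_add blb bla
      apply (rule V_cong)
      apply (simp add: mv_Eo ij)
      apply (auto simp: a_def b_def dl_def algebra_simps)
      done
    finally show ?thesis .
  qed
  have k1: "ceq n (g * cs g) 1" unfolding csg unfolding g_def by (rule key2[OF ax au r2 r3])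
  have k2: "ceq n (cs g * g) 1" unfolding csg unfolding g_def by (rule key2[OF au ax r1 r3'])
  have ev: "is_even (fr g)"
    unfolding g_def fr_plus fr_one fr_mul x_def u_def fr_V
    by (intro even_add even_one even_mul_oo odd_vec)
  have surj: "\<exists>w. ceq n (g * V n w * cs g) (V n w')" for w'
  proof (intro exI)
    have "V n (mv n (Eo n i j l) (mv n (Eo n i j (-l)) w')) = V n w'"
      apply (rule V_cong)
      apply (simp add: mv_Eo ij dj nd nd[symmetric])
      using ij(3) apply (auto simp: algebra_simps)
      done
    then show "ceq n (g * V n (mv n (Eo n i j (-l)) w') * cs g) (V n w')"
      using conj by metis
  qed
  have "fr g \<in> Spin n"
    unfolding Spin_iff using ag ev k1 k2 conj surj by blast
  then show ?thesis using conj by blast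
qed



definition sh :: "(nat \<Rightarrow> 'a::comm_ring_1) \<Rightarrow> (nat \<Rightarrow> nat \<Rightarrow> 'a) \<Rightarrow> (nat \<times> nat) list \<Rightarrow> nat \<Rightarrow> 'a" where
  "sh v c L m = sum_list (map (\<lambda>(k,j). c k j * (v j * dl k m - v k * dl j m)) L)"

lemma sh_Nil: "sh v c [] m = 0" by (simp add: sh_def)
lemma sh_Cons: "sh v c ((k,j) # L) m = c k j * (v j * dl k m - v k * dl j m) + sh v c L m"
  by (simp add: sh_def)

lemma hv_cong: "(\<And>m. m < n \<Longrightarrow> b m = b' m) \<Longrightarrow> i < 2*n \<Longrightarrow> hv n v b i = hv n v b' i"
  by (simp add: hv_def)

lemma main_ind:
  assumes "set L \<subseteq> {..<n} \<times> {..<n}"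
  shows "\<exists>G M. fr G \<in> Spin n \<and> M \<in> EO n \<and> (\<forall>z. ceq n (G * V n z * cs G) (V n (mv n M z)))
     \<and> (\<forall>b i. i < 2*n \<longrightarrow> mv n M (hv n v b) i = hv n v (\<lambda>m. b m + sh v c L m) i)"
  using assms
proof (induction L)
  case Nil
  have "fr (1::'a fa) \<in> Spin n"
    unfolding Spin_iff by (auto simp: AA_one cs_one fr_one even_one intro: ceq_refl)
  moreover have "ceq n (1 * V n z * cs 1) (V n (mv n idm z))" for z
    by (simp add: cs_one ceq_refl mv_idm cong: V_cong)
  moreover have "mv n idm (hv n v b) i = hv n v (\<lambda>m. b m + sh v c [] m) i" if "i < 2*n" for b i
    using that by (simp add: mv_idm sh_Nil)
  ultimately show ?case using EO.EO_id by blast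
next
  case (Cons p L)
  obtain k j where p: "p = (k, j)" by (cases p)
  have kj: "k < n" "j < n" using Cons.prems p by auto
  obtain G M where G: "fr G \<in> Spin n" and M: "M \<in> EO n"
    and GM: "\<forall>z. ceq n (G * V n z * cs G) (V n (mv n M z))"
    and Mh: "\<forall>b i. i < 2*n \<longrightarrow> mv n M (hv n v b) i = hv n v (\<lambda>m. b m + sh v c L m) i"
    using Cons by auto
  define E where "E = Eo n (n+k) j (c k j)"
  have ij: "n + k < 2*n" "j < 2*n" "n + k \<noteq> j" using kj by auto
  obtain g where g: "fr g \<in> Spin n" and gE: "\<forall>z. ceq n (g * V n z * cs g) (V n (mv n E z))"
    using gen[OF ij, of "c k j"] unfolding E_def by blast
  have aG: "AA n G" using G by (simp add: Spin_iff)
  have S: "fr (G * g) \<in> Spin n" using G g by (rule Spin_mult)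
  have EOM: "mmul n M E \<in> EO n" unfolding E_def using M ij by (rule EO.EO_step)
  have C: "ceq n (G * g * V n z * cs (G * g)) (V n (mv n (mmul n M E) z))" for z
  proof -
    have "G * g * V n z * cs (G * g) = G * (g * V n z * cs g) * cs G"
      by (simp add: cs_mult mult.assoc)
    also have "ceq n \<dots> (G * V n (mv n E z) * cs G)"
      using gE by (intro ceq_multL ceq_multR aG AA_cs) auto
    also have "ceq n \<dots> (V n (mv n M (mv n E z)))" using GM by auto
    also have "mv n M (mv n E z) = mv n (mmul n M E) z" by (simp add: mv_mmul)
    finally show ?thesis .
  qed
  have H: "mv n (mmul n M E) (hv n v b) i = hv n v (\<lambda>m. b m + sh v c (p # L) m) i"
    if i: "i < 2*n" for b i
  proof -
    define b' where "b' = (\<lambda>m. b m + c k j * (v j * dl k m - v k * dl j m))"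
    have "mv n E (hv n v b) q = hv n v b' q" if q: "q < 2*n" for q
    proof -
      have d1: "dperm n j = n + j" "dperm n (n+k) = k" using kj by (simp_all add: dperm_def)
      have "mv n E (hv n v b) q = hv n v b q + c k j * ((if q = n + k then v j else 0) - (if q = n + j then v k else 0))"
        unfolding E_def using ij q kj by (simp add: mv_Eo d1 hv_def)
      also have "\<dots> = hv n v b' q"
        using q kj by (auto simp: hv_def b'_def dl_def)
      finally show ?thesis .
    qed
    then have "mv n M (mv n E (hv n v b)) i = mv n M (hv n v b') i" by (intro fun_cong[OF mv_cong]) auto
    also have "\<dots> = hv n v (\<lambda>m. b' m + sh v c L m) i" using Mh i by auto
    also have "\<dots> = hv n v (\<lambda>m. b m + sh v c (p # L) m) i"
      by (simp add: p sh_Cons b'_def algebra_simps)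
    finally show ?thesis by (simp add: mv_mmul)
  qed
  show ?case using S EOM C H by blast
qed



lemma sh_full:
  fixes v w1 w2 :: "nat \<Rightarrow> 'a::comm_ring_1"
  assumes q1: "qf n v w1 = 1" and q2: "qf n v w2 = 1" and m: "m < n"
  shows "sh v (\<lambda>k j. (w2 k - w1 k) * w1 j) (List.product [0..<n] [0..<n]) m = w2 m - w1 m"
proof -
  define c where "c = (\<lambda>k j. (w2 k - w1 k) * w1 j)"
  have "sh v c (List.product [0..<n] [0..<n]) m
      = (\<Sum>(k,j)\<in>{..<n} \<times> {..<n}. c k j * (v j * dl k m - v k * dl j m))"
    unfolding sh_def
    by (simp add: sum_list_distinct_conv_sum_set distinct_product atLeast0LessThan)
  also have "\<dots> = (\<Sum>k<n. \<Sum>j<n. c k j * (v j * dl k m - v k * dl j m))"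
    by (rule sum.cartesian_product[symmetric])
  also have "\<dots> = (\<Sum>k<n. \<Sum>j<n. (w2 k - w1 k) * dl k m * (v j * w1 j))
                 - (\<Sum>k<n. \<Sum>j<n. (w1 j * dl j m) * ((w2 k - w1 k) * v k))"
    unfolding c_def sum_subtractf[symmetric] by (intro sum.cong refl) (simp add: algebra_simps)
  also have "(\<Sum>k<n. \<Sum>j<n. (w2 k - w1 k) * dl k m * (v j * w1 j)) = (\<Sum>k<n. (w2 k - w1 k) * dl k m)"
    using q1 by (simp add: sum_distrib_left[symmetric] qf_def)
  also have "\<dots> = (\<Sum>k<n. if m = k then w2 k - w1 k else 0)"
    by (intro sum.cong) (auto simp: dl_def)
  also have "\<dots> = w2 m - w1 m"
    using m by simp
  also have "(\<Sum>k<n. \<Sum>j<n. (w1 j * dl j m) * ((w2 k - w1 k) * v k))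
      = (\<Sum>j<n. w1 j * dl j m) * (\<Sum>k<n. (w2 k - w1 k) * v k)"
    by (simp add: sum_distrib_left sum_distrib_right mult.commute)
  also have "(\<Sum>k<n. (w2 k - w1 k) * v k) = qf n v w2 - qf n v w1"
    by (simp add: qf_def algebra_simps sum_subtractf)
  finally show ?thesis using q1 q2 by (simp add: c_def)
qed

theorem theorem4p3:
  fixes n :: nat and v w1 w2 :: "nat \<Rightarrow> 'a::comm_ring_1"
  assumes "n \<ge> 3" and "qf n v w1 = 1" and "qf n v w2 = 1"
  shows "(\<exists>M \<in> EO n. \<forall>i < 2*n. mv n M (hv n v w1) i = hv n v w2 i)
       \<and> (\<exists>g \<in> Epin n. cl_eq n (fa_mul (fa_mul g (vec n (hv n v w1))) (cstar g)) (vec n (hv n v w2)))"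
proof -
  define L where "L = List.product [0..<n] [0..<n]"
  define c where "c = (\<lambda>k j. (w2 k - w1 k) * w1 j)"
  have "set L \<subseteq> {..<n} \<times> {..<n}" by (auto simp: L_def)
  then obtain G M where G: "fr G \<in> Spin n" and M: "M \<in> EO n"
    and GM: "\<forall>z. ceq n (G * V n z * cs G) (V n (mv n M z))"
    and Mh: "\<forall>b i. i < 2*n \<longrightarrow> mv n M (hv n v b) i = hv n v (\<lambda>m. b m + sh v c L m) i"
    using main_ind[of L n v c] by blast
  have P1: "mv n M (hv n v w1) i = hv n v w2 i" if i: "i < 2*n" for i
  proof -
    have "mv n M (hv n v w1) i = hv n v (\<lambda>m. w1 m + sh v c L m) i" using Mh i by auto
    also have "\<dots> = hv n v w2 i"
      by (rule hv_cong[OF _ i]) (simp add: L_def c_def sh_full assms)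
    finally show ?thesis .
  qed
  have Ep: "fr G \<in> Epin n" using G M GM by (rule Epin_I)
  have "ceq n (G * V n (hv n v w1) * cs G) (V n (mv n M (hv n v w1)))" using GM by auto
  also have "V n (mv n M (hv n v w1)) = V n (hv n v w2)" by (rule V_cong) (rule P1)
  finally have "cl_eq n (fa_mul (fa_mul (fr G) (vec n (hv n v w1))) (cstar (fr G))) (vec n (hv n v w2))"
    by (simp add: ceq_cl_eq fr_mul fr_cs fr_V)
  then show ?thesis using M P1 Ep by blast
qed

end
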